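(* If $R$ is a closed $\forall^+$ type, then for every environment $\gamma$, $\llbracket R\rrbracket_\gamma$ is a partial equivalence relation (symmetric and transitive).
   Context: Terms are those of the pure untyped $\lambda$-calculus, up to $\alpha$-equivalence; $=_{\beta\eta}$ is $\beta\eta$-convertibility. Relational types: $R ::= X \mid R\to R' \mid \forall X.R \mid R^{\cup} \mid R\cdot R' \mid t$ (last form: promotion of a term). A relation on terms is $\beta\eta$-closed if closed under replacing either related term by a $\beta\eta$-equal one; $\mathcal{R}$ is the set of such relations; environments $\gamma$ map finitely many type variables to $\mathcal{R}$. Interpretation: $\llbracket X\rrbracket_\gamma=\gamma(X)$; $t\,\llbracket R\to R'\rrbracket_\gamma\,t'$ iff for all $a,a'$ with $a\,\llbracket R\rrbracket_\gamma\,a'$, $t\,a\,\llbracket R'\rrbracket_\gamma\,t'\,a'$; $\llbracket \forall X.R\rrbracket_\gamma=\bigcap_{r\in\mathcal{R}}\llbracket R\rrbracket_{\gamma[X\mapsto r]}$; $t\,\llbracket R^\cup\rrbracket_\gamma\,t'$ iff $t'\,\llbracket R\rrbracket_\gamma\,t$; $t\,\llbracket R\cdot R'\rrbracket_\gamma\,t'$ iff $\exists t''$, $t\,\llbracket R\rrbracket_\gamma\,t''$ and $t''\,\llbracket R'\rrbracket_\gamma\,t'$; $\llbracket \hat t\rrbracket_\gamma=\{(t,t')\mid \hat t\,t=_{\beta\eta}t'\}$. Polarities $p\in\{+,-\}$, $\bar p$ the other; $\forall^p$: type variables are $\forall^p$; if $R$ is $\forall^{\bar p}$ and $R'$ is $\forall^p$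 then $R\to R'$ is $\forall^p$; if $R$ is $\forall^+$ then $\forall X.R$ is $\forall^+$; if $R$ is $\forall^p$ then so is $R^\cup$; a promotion of $t$ with $t=_{\beta\eta}\lambda x.x$ is $\forall^p$. *)

theory Defs
  imports Main
begin

section \<open>Pure untyped lambda terms (de Bruijn indices, so alpha-equivalence is equality)\<close>

datatype trm = Var nat | App trm trm | Lam trm

primrec lift :: "trm \<Rightarrow> nat \<Rightarrow> trm" where
  "lift (Var i) k = (if i < k then Var i else Var (Suc i))"
| "lift (App s t) k = App (lift s k) (lift t k)"
| "lift (Lam s) k = Lam (lift s (Suc k))"

primrec subst :: "trm \<Rightarrow> trm \<Rightarrow> nat \<Rightarrow> trm" where
  "subst (Var i) u k = (if k < i then Var (i - 1) else if i = k then u else Var i)"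
| "subst (App s t) u k = App (subst s u k) (subst t u k)"
| "subst (Lam s) u k = Lam (subst s (lift u 0) (Suc k))"

inductive bestep :: "trm \<Rightarrow> trm \<Rightarrow> bool" where
  beta: "bestep (App (Lam s) t) (subst s t 0)"
| eta: "bestep (Lam (App (lift s 0) (Var 0))) s"
| appL: "bestep s s' \<Longrightarrow> bestep (App s t) (App s' t)"
| appR: "bestep t t' \<Longrightarrow> bestep (App s t) (App s t')"
| abs: "bestep s s' \<Longrightarrow> bestep (Lam s) (Lam s')"

definition beq :: "trm \<Rightarrow> trm \<Rightarrow> bool" where
  "beq = equivclp bestep"

type_synonym rel = "trm \<Rightarrow> trm \<Rightarrow> bool"

definition be_closed :: "rel \<Rightarrow> bool" where
  "be_closed r \<longleftrightarrow> (\<forall>t t' u u'. r t t' \<and> beq t u \<and> beq t' u' \<longrightarrow> r u u')"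

datatype rty =
    TVar string
  | Arr rty rty
  | All string rty
  | Cnv rty
  | Cmp rty rty
  | Prom trm

primrec ftv :: "rty \<Rightarrow> string set" where
  "ftv (TVar X) = {X}"
| "ftv (Arr R R') = ftv R \<union> ftv R'"
| "ftv (All X R) = ftv R - {X}"
| "ftv (Cnv R) = ftv R"
| "ftv (Cmp R R') = ftv R \<union> ftv R'"
| "ftv (Prom t) = {}"

definition closed_rty :: "rty \<Rightarrow> bool" where
  "closed_rty R \<longleftrightarrow> ftv R = {}"

text \<open>Environments: finite partial maps from type variables to beta-eta-closed relations.
  An unmapped variable is interpreted as the empty relation (irrelevant for closed types).\<close>
type_synonym env = "string \<rightharpoonup> rel"

definition env_ok :: "env \<Rightarrow> bool" where
  "env_ok \<gamma> \<longleftrightarrow> finite (dom \<gamma>) \<and> (\<forall>r \<in> ran \<gamma>. be_closed r)"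

primrec interp :: "env \<Rightarrow> rty \<Rightarrow> rel" where
  "interp \<gamma> (TVar X) = (case \<gamma> X of Some r \<Rightarrow> r | None \<Rightarrow> (\<lambda>_ _. False))"
| "interp \<gamma> (Arr R R') = (\<lambda>t t'. \<forall>a a'. interp \<gamma> R a a' \<longrightarrow> interp \<gamma> R' (App t a) (App t' a'))"
| "interp \<gamma> (All X R) = (\<lambda>t t'. \<forall>r. be_closed r \<longrightarrow> interp (\<gamma>(X \<mapsto> r)) R t t')"
| "interp \<gamma> (Cnv R) = (\<lambda>t t'. interp \<gamma> R t' t)"
| "interp \<gamma> (Cmp R R') = (\<lambda>t t'. \<exists>t''. interp \<gamma> R t t'' \<and> interp \<gamma> R' t'' t')"
| "interp \<gamma> (Prom s) = (\<lambda>t t'. beq (App s t) t')"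

text \<open>Polarity: True = +, False = -.\<close>
inductive forallp :: "bool \<Rightarrow> rty \<Rightarrow> bool" where
  var: "forallp p (TVar X)"
| arr: "forallp (\<not> p) R \<Longrightarrow> forallp p R' \<Longrightarrow> forallp p (Arr R R')"
| all: "forallp True R \<Longrightarrow> forallp True (All X R)"
| cnv: "forallp p R \<Longrightarrow> forallp p (Cnv R)"
| prom: "beq t (Lam (Var 0)) \<Longrightarrow> forallp p (Prom t)"

end

theory Submission
  imports Defs
begin

lemma lift_lift: "i < k + 1 \<Longrightarrow> lift (lift t i) (Suc k) = lift (lift t k) i"
  by (induct t arbitrary: i k) auto

lemma lift_subst: "j < Suc i \<Longrightarrow> lift (subst t s j) i = subst (lift t (Suc i)) (lift s i) j"
  by (induct t arbitrary: i j s) (simp_all add: diff_Suc split: nat.split, auto simp: lift_lift)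

lemma lift_subst_lt: "i < j + 1 \<Longrightarrow> lift (subst t s j) i = subst (lift t i) (lift s i) (j + 1)"
  by (induct t arbitrary: i j s) (auto simp: lift_lift)

lemma subst_lift: "subst (lift t k) s k = t"
  by (induct t arbitrary: k s) auto

lemma subst_subst:
  "i < Suc j \<Longrightarrow> subst (subst t (lift v i) (Suc j)) (subst u v j) i = subst (subst t u i) v j"
proof (induct t arbitrary: i j u v)
  case (Lam t)
  have "subst (subst t (lift (lift v 0) (Suc i)) (Suc (Suc j))) (subst (lift u 0) (lift v 0) (Suc j)) (Suc i)
        = subst (subst t (lift u 0) (Suc i)) (lift v 0) (Suc j)"
    using Lam by simp
  then show ?case using Lam(2) by (simp add: lift_lift lift_subst_lt)
qed (auto simp: subst_lift)

lemma bestep_lift: "bestep s s' \<Longrightarrow> bestep (lift s k) (lift s' k)"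
proof (induct arbitrary: k rule: bestep.induct)
  case (beta s t)
  then show ?case using bestep.beta[of "lift s (Suc k)" "lift t k"] by (simp add: lift_subst)
next
  case (eta s)
  then show ?case using bestep.eta[of "lift s k"] by (simp add: lift_lift)
qed (auto intro: bestep.intros)

lemma bestep_subst: "bestep s s' \<Longrightarrow> bestep (subst s u k) (subst s' u k)"
proof (induct arbitrary: k u rule: bestep.induct)
  case (beta s t)
  then show ?case using bestep.beta[of "subst s (lift u 0) (Suc k)" "subst t u k"]
    by (simp add: subst_subst)
next
  case (eta s)
  then show ?case using bestep.eta[of "subst s u k"] by (simp add: lift_subst_lt)
qed (auto intro: bestep.intros)

lemma beq_map:
  assumes "\<And>s s'. bestep s s' \<Longrightarrow> bestep (f s) (f s')" and "beq s s'"
  shows "beq (f s) (f s')"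
proof -
  have "(symclp bestep)\<^sup>*\<^sup>* s s'" using assms(2) by (simp add: beq_def equivclp_def)
  then have "(symclp bestep)\<^sup>*\<^sup>* (f s) (f s')"
  proof induct
    case base then show ?case by simp
  next
    case (step y z)
    then have "symclp bestep (f y) (f z)" using assms(1) by (auto simp: symclp_def)
    with step show ?case by (meson rtranclp.rtrancl_into_rtrancl)
  qed
  then show ?thesis by (simp add: beq_def equivclp_def)
qed

lemma beq_refl[simp]: "beq s s" by (simp add: beq_def)
lemma beq_sym: "beq s t \<Longrightarrow> beq t s" by (simp add: beq_def equivclp_sym)
lemma beq_trans: "beq s t \<Longrightarrow> beq t u \<Longrightarrow> beq s u"
  unfolding beq_def by (rule equivclp_trans)
lemma beq_step: "bestep s t \<Longrightarrow> beq s t"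
  unfolding beq_def by (rule r_into_equivclp)

lemma beq_App: "beq s s' \<Longrightarrow> beq t t' \<Longrightarrow> beq (App s t) (App s' t')"
proof -
  assume a: "beq s s'" "beq t t'"
  have "beq (App s t) (App s' t)"
    using beq_map[of "\<lambda>x. App x t"] a(1) by (auto intro: bestep.appL)
  moreover have "beq (App s' t) (App s' t')"
    using beq_map[of "\<lambda>x. App s' x"] a(2) by (auto intro: bestep.appR)
  ultimately show ?thesis by (rule beq_trans)
qed

lemma beq_Lam: "beq s s' \<Longrightarrow> beq (Lam s) (Lam s')"
  using beq_map[of Lam] by (auto intro: bestep.abs)

primrec bnd :: "nat \<Rightarrow> trm \<Rightarrow> bool" where
  "bnd k (Var i) = (i < k)"
| "bnd k (App s t) = (bnd k s \<and> bnd k t)"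
| "bnd k (Lam s) = bnd (Suc k) s"

lemma bnd_mono: "bnd k t \<Longrightarrow> k \<le> m \<Longrightarrow> bnd m t"
  by (induct t arbitrary: k m) auto

lemma bnd_ex: "\<exists>k. bnd k t"
proof (induct t)
  case (Var x) then show ?case by (auto intro: exI[of _ "Suc x"])
next
  case (App t1 t2)
  then obtain a b where "bnd a t1" "bnd b t2" by auto
  then show ?case by (auto intro!: exI[of _ "max a b"] intro: bnd_mono)
next
  case (Lam t)
  then obtain a where "bnd a t" by auto
  then show ?case by (auto intro!: exI[of _ a] intro: bnd_mono)
qed

lemma bnd_subst: "bnd k s \<Longrightarrow> subst s u k = s"
  by (induct s arbitrary: k u) auto

lemma bnd_lift: "bnd k s \<Longrightarrow> bnd (Suc k) (lift s j)"
  by (induct s arbitrary: k j) auto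

lemma ext_beq:
  assumes h: "\<And>n. beq (App t (Var n)) (App t' (Var n))"
  shows "beq t t'"
proof -
  obtain a b where "bnd a t" "bnd b t'" using bnd_ex by blast
  then have bt: "bnd (max a b) t" "bnd (max a b) t'" by (auto intro: bnd_mono)
  define n where "n = max a b"
  have "beq (lift (App t (Var n)) 0) (lift (App t' (Var n)) 0)"
    using beq_map[of "\<lambda>x. lift x 0"] h bestep_lift by blast
  then have "beq (subst (lift (App t (Var n)) 0) (Var 0) (Suc n))
                 (subst (lift (App t' (Var n)) 0) (Var 0) (Suc n))"
    using beq_map[of "\<lambda>x. subst x (Var 0) (Suc n)"] bestep_subst by blast
  moreover have "subst (lift t 0) (Var 0) (Suc n) = lift t 0"
    using bt n_def by (auto intro: bnd_subst bnd_lift)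
  moreover have "subst (lift t' 0) (Var 0) (Suc n) = lift t' 0"
    using bt n_def by (auto intro: bnd_subst bnd_lift)
  ultimately have "beq (App (lift t 0) (Var 0)) (App (lift t' 0) (Var 0))" by simp
  then have "beq (Lam (App (lift t 0) (Var 0))) (Lam (App (lift t' 0) (Var 0)))"
    by (rule beq_Lam)
  then show ?thesis
    by (meson beq_step beq_sym beq_trans bestep.eta)
qed

lemma beq_id: "beq s (Lam (Var 0)) \<Longrightarrow> beq (App s t) t"
proof -
  assume "beq s (Lam (Var 0))"
  then have "beq (App s t) (App (Lam (Var 0)) t)" by (simp add: beq_App)
  moreover have "beq (App (Lam (Var 0)) t) t"
    using beq_step[OF bestep.beta[of "Var 0" t]] by simp
  ultimately show ?thesis by (rule beq_trans)
qed

lemma be_closed_beq: "be_closed beq"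
  unfolding be_closed_def by (meson beq_sym beq_trans)

lemma ident:
  "forallp p R \<Longrightarrow> (\<forall>X \<in> ftv R. \<gamma> X = Some beq) \<Longrightarrow>
   (p \<longrightarrow> (\<forall>t t'. interp \<gamma> R t t' \<longrightarrow> beq t t')) \<and>
   (\<not> p \<longrightarrow> (\<forall>t t'. beq t t' \<longrightarrow> interp \<gamma> R t t'))"
proof (induct arbitrary: \<gamma> rule: forallp.induct)
  case (var p X)
  then show ?case by simp
next
  case (arr p R R')
  have h1: "\<forall>X\<in>ftv R. \<gamma> X = Some beq" and h2: "\<forall>X\<in>ftv R'. \<gamma> X = Some beq"
    using arr(5) by auto
  have IH1: "(\<not>p \<longrightarrow> (\<forall>t t'. interp \<gamma> R t t' \<longrightarrow> beq t t')) \<and>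
      (p \<longrightarrow> (\<forall>t t'. beq t t' \<longrightarrow> interp \<gamma> R t t'))" using arr(2)[OF h1] by simp
  have IH2: "(p \<longrightarrow> (\<forall>t t'. interp \<gamma> R' t t' \<longrightarrow> beq t t')) \<and>
      (\<not>p \<longrightarrow> (\<forall>t t'. beq t t' \<longrightarrow> interp \<gamma> R' t t'))" using arr(4)[OF h2] by simp
  show ?case
  proof (intro conjI impI allI)
    fix t t' assume p: p and i: "interp \<gamma> (Arr R R') t t'"
    show "beq t t'"
    proof (rule ext_beq)
      fix n
      have "interp \<gamma> R (Var n) (Var n)" using IH1 p by simp
      then show "beq (App t (Var n)) (App t' (Var n))" using i IH2 p by simp
    qed
  next
    fix t t' assume p: "\<not> p" and b: "beq t t'"
    show "interp \<gamma> (Arr R R') t t'"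
      using IH1 IH2 p b by (simp add: beq_App)
  qed
next
  case (all R X)
  have "(\<forall>Y \<in> ftv R. (\<gamma>(X \<mapsto> beq)) Y = Some beq)" using all(3) by auto
  then have "\<forall>t t'. interp (\<gamma>(X \<mapsto> beq)) R t t' \<longrightarrow> beq t t'" using all(2) by blast
  then show ?case using be_closed_beq by simp
next
  case (cnv p R)
  have IH: "(p \<longrightarrow> (\<forall>t t'. interp \<gamma> R t t' \<longrightarrow> beq t t')) \<and>
      (\<not>p \<longrightarrow> (\<forall>t t'. beq t t' \<longrightarrow> interp \<gamma> R t t'))"
    using cnv(2)[of \<gamma>] cnv(3) by simp
  show ?case
  proof (intro conjI impI allI)
    fix t t' assume "p" "interp \<gamma> (Cnv R) t t'"
    then show "beq t t'" using IH beq_sym by simp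
  next
    fix t t' assume "\<not>p" "beq t t'"
    then show "interp \<gamma> (Cnv R) t t'" using IH beq_sym by simp
  qed
next
  case (prom t p)
  then show ?case using beq_id by (meson beq_sym beq_trans interp.simps(6))
qed

lemma interp_closed:
  "(\<forall>X r. \<gamma> X = Some r \<longrightarrow> be_closed r) \<Longrightarrow> be_closed (interp \<gamma> R)"
proof (induct R arbitrary: \<gamma>)
  case (TVar X)
  show ?case
  proof (cases "\<gamma> X")
    case None then show ?thesis by (simp add: be_closed_def)
  next
    case (Some r) then show ?thesis using TVar by simp
  qed
next
  case (Arr R1 R2)
  have c2: "be_closed (interp \<gamma> R2)" using Arr by blast
  show ?case unfolding be_closed_def
  proof (intro allI impI)
    fix t t' u u'
    assume h: "interp \<gamma> (Arr R1 R2) t t' \<and> beq t u \<and> beq t' u'"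
    show "interp \<gamma> (Arr R1 R2) u u'"
    proof (simp, intro allI impI)
      fix a a' assume "interp \<gamma> R1 a a'"
      then have "interp \<gamma> R2 (App t a) (App t' a')" using h by simp
      moreover have "beq (App t a) (App u a)" "beq (App t' a') (App u' a')"
        using h by (simp_all add: beq_App)
      ultimately show "interp \<gamma> R2 (App u a) (App u' a')"
        using c2 unfolding be_closed_def by blast
    qed
  qed
next
  case (All X R)
  show ?case unfolding be_closed_def
  proof (intro allI impI)
    fix t t' u u'
    assume h: "interp \<gamma> (All X R) t t' \<and> beq t u \<and> beq t' u'"
    show "interp \<gamma> (All X R) u u'"
    proof (simp, intro allI impI)
      fix r :: rel assume r: "be_closed r"
      have "\<forall>Y q. (\<gamma>(X \<mapsto> r)) Y = Some q \<longrightarrow> be_closed q" using All(2) r by auto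
      then have c: "be_closed (interp (\<gamma>(X \<mapsto> r)) R)" by (rule All(1))
      have "interp (\<gamma>(X \<mapsto> r)) R t t'" using h r by simp
      then show "interp (\<gamma>(X \<mapsto> r)) R u u'" using c h unfolding be_closed_def by blast
    qed
  qed
next
  case (Cnv R)
  have c: "be_closed (interp \<gamma> R)" using Cnv by blast
  note cc = c[unfolded be_closed_def, rule_format]
  show ?case unfolding be_closed_def
  proof (intro allI impI)
    fix t t' u u'
    assume h: "interp \<gamma> (Cnv R) t t' \<and> beq t u \<and> beq t' u'"
    then have "interp \<gamma> R t' t" "beq t' u'" "beq t u" by simp_all
    then have "interp \<gamma> R u' u" by (intro cc) simp
    then show "interp \<gamma> (Cnv R) u u'" by simp
  qed
next
  case (Cmp R1 R2)
  have c1: "be_closed (interp \<gamma> R1)" and c2: "be_closed (interp \<gamma> R2)" using Cmp by blast+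
  note cc1 = c1[unfolded be_closed_def, rule_format]
  note cc2 = c2[unfolded be_closed_def, rule_format]
  show ?case unfolding be_closed_def
  proof (intro allI impI)
    fix t t' u u'
    assume h: "interp \<gamma> (Cmp R1 R2) t t' \<and> beq t u \<and> beq t' u'"
    then obtain m where m: "interp \<gamma> R1 t m" "interp \<gamma> R2 m t'" by auto
    have "interp \<gamma> R1 u m" using m(1) h by (intro cc1[of t m]) simp
    moreover have "interp \<gamma> R2 m u'" using m(2) h by (intro cc2[of m t']) simp
    ultimately show "interp \<gamma> (Cmp R1 R2) u u'" by auto
  qed
next
  case (Prom s)
  show ?case unfolding be_closed_def
  proof (intro allI impI)
    fix t t' u u'
    assume h: "interp \<gamma> (Prom s) t t' \<and> beq t u \<and> beq t' u'"
    then have "beq (App s u) (App s t)" by (simp add: beq_App beq_sym)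
    then show "interp \<gamma> (Prom s) u u'" using h by (simp, meson beq_trans)
  qed
qed

theorem mainTheorem12:
  assumes "closed_rty R" and "forallp True R" and "env_ok \<gamma>"
  shows "symp (interp \<gamma> R) \<and> transp (interp \<gamma> R)"
proof -
  have sub: "\<And>t t'. interp \<gamma> R t t' \<Longrightarrow> beq t t'"
    using ident[OF assms(2), of \<gamma>] assms(1) by (simp add: closed_rty_def)
  have cl: "be_closed (interp \<gamma> R)"
    using assms(3) by (intro interp_closed) (auto simp: env_ok_def intro: ranI)
  show ?thesis
  proof
    show "symp (interp \<gamma> R)"
    proof (rule sympI)
      fix t t' assume a: "interp \<gamma> R t t'"
      then have "beq t t'" by (rule sub)
      then show "interp \<gamma> R t' t" using cl a unfolding be_closed_def by (meson beq_sym)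
    qed
  next
    show "transp (interp \<gamma> R)"
    proof (rule transpI)
      fix t t' t'' assume a: "interp \<gamma> R t t'" and b: "interp \<gamma> R t' t''"
      from b have "beq t' t''" by (rule sub)
      then show "interp \<gamma> R t t''" using cl a unfolding be_closed_def by (meson beq_refl)
    qed
  qed
qed

end
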